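(* Let $n\ge 3$ be a multiple of $3$ and let $A\subseteq\mathbb{F}_3^n$ be such that the equation $a+b+c=0$ with $a,b,c\in A$ has no solutions except $a=b=c$. Then $$|A|\le 3\sum_{i=0}^{2n/3}\binom{n}{i}_2-\binom{n}{2n/3}_2 .$$
   Context: $\mathbb{F}_3$ is the field of integers modulo $3$. The trinomial coefficient $\binom{n}{k}_2$ is the coefficient of $x^k$ in $(1+x+x^2)^n$. *)

theory Defs
  imports "HOL-Analysis.Analysis" "HOL-Library.Numeral_Type" "HOL-Computational_Algebra.Polynomial"
begin

definition trinomial :: "nat \<Rightarrow> nat \<Rightarrow> nat" where
  "trinomial n k = coeff ([:1, 1, 1:] ^ n) k"

end

theory Submission
  imports Defs
begin

definition Eall :: "('n::finite \<Rightarrow> nat) set" where "Eall = {e. \<forall>i. e i \<le> 2}"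

lemma Eall_PiE: "Eall = PiE UNIV (\<lambda>_. {..2::nat})"
  by (auto simp: Eall_def PiE_UNIV_domain)

lemma finite_Eall[simp]: "finite (Eall :: ('n::finite \<Rightarrow> nat) set)"
  unfolding Eall_PiE by (simp add: finite_PiE)

lemma card_Eall: "card (Eall :: ('n::finite \<Rightarrow> nat) set) = 3 ^ CARD('n)"
  unfolding Eall_PiE by (simp add: card_PiE)

lemma prod_monom1: "finite J \<Longrightarrow> (\<Prod>i\<in>J. monom (1::nat) (g i)) = monom 1 (sum g J)"
proof (induction J rule: finite_induct)
  case empty show ?case by (simp only: prod.empty sum.empty monom_eq_1)
next
  case (insert x F) then show ?case by (simp add: mult_monom)
qed

lemma sum_monom3: "(\<Sum>t\<le>2::nat. monom (1::nat) t) = [:1,1,1:]"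
  by (simp add: numeral_2_eq_2 poly_eq_iff coeff_monom coeff_pCons split: nat.splits)

lemma count_gen:
  assumes "finite J"
  shows "(\<Sum>e\<in>PiE J (\<lambda>_. {..2::nat}). monom (1::nat) (sum e J)) = [:1,1,1:]^card J"
proof -
  have "[:1,1,1:]^card J = (\<Prod>i\<in>J. \<Sum>t\<le>2::nat. monom (1::nat) t)"
    by (simp only: sum_monom3 prod_constant)
  also have "\<dots> = (\<Sum>g\<in>PiE J (\<lambda>_. {..2::nat}). \<Prod>i\<in>J. monom 1 (g i))"
    by (rule prod_sum_PiE) (use assms in auto)
  also have "\<dots> = (\<Sum>e\<in>PiE J (\<lambda>_. {..2::nat}). monom (1::nat) (sum e J))"
    by (intro sum.cong refl prod_monom1[OF assms])
  finally show ?thesis by simp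
qed

lemma card_Eeq: "card {e\<in>(Eall :: ('n::finite \<Rightarrow> nat) set). sum e UNIV = j} = trinomial CARD('n) j"
proof -
  have "trinomial CARD('n) j = coeff (\<Sum>e\<in>(Eall :: ('n::finite \<Rightarrow> nat) set). monom (1::nat) (sum e UNIV)) j"
    unfolding trinomial_def Eall_PiE by (subst count_gen) auto
  also have "\<dots> = (\<Sum>e\<in>(Eall :: ('n::finite \<Rightarrow> nat) set). if sum e UNIV = j then (1::nat) else 0)"
    unfolding coeff_sum coeff_monom by (intro sum.cong) auto
  also have "\<dots> = card {e\<in>(Eall :: ('n::finite \<Rightarrow> nat) set). sum e UNIV = j}"
    by (simp add: sum.If_cases Int_def)
  finally show ?thesis by simp
qed

lemma card_Ele: "card {e\<in>(Eall :: ('n::finite \<Rightarrow> nat) set). sum e UNIV \<le> k} = (\<Sum>j=0..k. trinomial CARD('n) j)"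
proof -
  have "{e\<in>(Eall :: ('n::finite \<Rightarrow> nat) set). sum e UNIV \<le> k} = (\<Union>j\<in>{0..k}. {e\<in>Eall. sum e UNIV = j})"
    by auto
  then have "card {e\<in>(Eall :: ('n::finite \<Rightarrow> nat) set). sum e UNIV \<le> k} = (\<Sum>j=0..k. card {e\<in>(Eall :: ('n::finite \<Rightarrow> nat) set). sum e UNIV = j})"
    by (simp, subst card_UN_disjoint) auto
  then show ?thesis by (simp add: card_Eeq)
qed

lemma card_Elt: "card {e\<in>(Eall :: ('n::finite \<Rightarrow> nat) set). sum e UNIV < k} = (\<Sum>j<k. trinomial CARD('n) j)"
proof -
  have "{e\<in>(Eall :: ('n::finite \<Rightarrow> nat) set). sum e UNIV < k} = (\<Union>j\<in>{..<k}. {e\<in>Eall. sum e UNIV = j})"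
    by auto
  then have "card {e\<in>(Eall :: ('n::finite \<Rightarrow> nat) set). sum e UNIV < k} = (\<Sum>j<k. card {e\<in>(Eall :: ('n::finite \<Rightarrow> nat) set). sum e UNIV = j})"
    by (simp, subst card_UN_disjoint) auto
  then show ?thesis by (simp add: card_Eeq)
qed

lemma sum_compl2:
  fixes e :: "'n::finite \<Rightarrow> nat"
  assumes "e \<in> Eall"
  shows "sum (\<lambda>i. 2 - e i) UNIV + sum e UNIV = 2 * CARD('n)"
proof -
  have "sum (\<lambda>i. 2 - e i) UNIV + sum e UNIV = sum (\<lambda>i. (2 - e i) + e i) UNIV"
    by (simp add: sum.distrib)
  also have "\<dots> = sum (\<lambda>i::'n. 2) UNIV"
    using assms by (intro sum.cong) (auto simp: Eall_def)
  finally show ?thesis by simp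
qed

lemma card_Egt_sym:
  assumes "k \<le> 2 * CARD('n)"
  shows "card {e\<in>(Eall :: ('n::finite \<Rightarrow> nat) set). sum e UNIV > k} = card {e\<in>(Eall :: ('n::finite \<Rightarrow> nat) set). sum e UNIV < 2 * CARD('n) - k}"
proof -
  let ?f = "\<lambda>(e::'n \<Rightarrow> nat) i. 2 - e i"
  have inv: "?f (?f e) = e" if "e \<in> Eall" for e
  proof
    fix i from that have "e i \<le> 2" by (simp add: Eall_def)
    then show "?f (?f e) i = e i" by simp
  qed
  have fE: "?f e \<in> Eall" for e by (simp add: Eall_def)
  have "bij_betw ?f {e\<in>(Eall :: ('n::finite \<Rightarrow> nat) set). sum e UNIV > k} {e\<in>(Eall :: ('n::finite \<Rightarrow> nat) set). sum e UNIV < 2 * CARD('n) - k}"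
  proof (rule bij_betwI[where g="?f"])
    show "?f \<in> {e \<in> Eall. k < sum e UNIV} \<rightarrow> {e \<in> Eall. sum e UNIV < 2 * CARD('n) - k}"
    proof
      fix e :: "'n \<Rightarrow> nat" assume a: "e \<in> {e \<in> Eall. k < sum e UNIV}"
      then have eq: "sum (?f e) UNIV + sum e UNIV = 2 * CARD('n)" by (intro sum_compl2) simp
      from a have "k < sum e UNIV" by simp
      with eq have "sum (?f e) UNIV < 2 * CARD('n) - k" by linarith
      with fE show "?f e \<in> {e \<in> Eall. sum e UNIV < 2 * CARD('n) - k}" by simp
    qed
    show "?f \<in> {e \<in> Eall. sum e UNIV < 2 * CARD('n) - k} \<rightarrow> {e \<in> Eall. k < sum e UNIV}"
    proof
      fix e :: "'n \<Rightarrow> nat" assume a: "e \<in> {e \<in> Eall. sum e UNIV < 2 * CARD('n) - k}"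
      then have eq: "sum (?f e) UNIV + sum e UNIV = 2 * CARD('n)" by (intro sum_compl2) simp
      from a have "sum e UNIV < 2 * CARD('n) - k" by simp
      with eq have "k < sum (?f e) UNIV" by linarith
      with fE show "?f e \<in> {e \<in> Eall. k < sum e UNIV}" by simp
    qed
    show "?f (?f e) = e" if "e \<in> {e \<in> Eall. k < sum e UNIV}" for e
      using that inv by simp
    show "?f (?f e) = e" if "e \<in> {e \<in> Eall. sum e UNIV < 2 * CARD('n) - k}" for e
      using that inv by simp
  qed
  then show ?thesis by (rule bij_betw_same_card)
qed


lemma three_cases: fixes x :: 3 shows "x = 0 \<or> x = 1 \<or> x = 2"
proof -
  have "x = 1 \<or> x = 2 \<or> x = 3" by (rule exhaust_3)
  moreover have "(3::3) = 0" by simp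
  ultimately show ?thesis by auto
qed

lemma three_sq: fixes x :: 3 shows "x \<noteq> 0 \<Longrightarrow> x * x = 1"
  using three_cases[of x] by auto

lemma three_neg2: fixes x :: 3 shows "- (x + x) = x"
  using three_cases[of x] by auto

lemma vec_neg2: fixes x :: "3^'n" shows "- (x + x) = x"
  unfolding vec_eq_iff by (metis three_neg2 vector_add_component vector_uminus_component)

definition mon :: "('n::finite \<Rightarrow> nat) \<Rightarrow> 3^'n \<Rightarrow> 3" where
  "mon e x = (\<Prod>i\<in>UNIV. (x$i)^(e i))"

definition ev :: "('n::finite \<Rightarrow> nat) set \<Rightarrow> (('n \<Rightarrow> nat) \<Rightarrow> 3) \<Rightarrow> 3^'n \<Rightarrow> 3" where
  "ev S c = (\<lambda>x. \<Sum>e\<in>S. c e * mon e x)"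

lemma ev_restrict: "ev S (restrict c S) = ev S c"
  unfolding ev_def by (intro ext sum.cong) auto

lemma ev_add: "ev S (\<lambda>e. c e + d e) = (\<lambda>x. ev S c x + ev S d x)"
  unfolding ev_def by (simp add: sum.distrib distrib_right)

lemma ev_smult: "ev S (\<lambda>e. k * c e) = (\<lambda>x. k * ev S c x)"
  unfolding ev_def by (simp add: sum_distrib_left mult.assoc)

lemma ev_sum: "finite T \<Longrightarrow> ev S (\<lambda>e. \<Sum>a\<in>T. c a e) = (\<lambda>x. \<Sum>a\<in>T. ev S (c a) x)"
  unfolding ev_def by (simp add: sum_distrib_right sum.swap[of _ S])

definition delta :: "3^'n \<Rightarrow> 3^'n \<Rightarrow> 3" where
  "delta a x = (\<Prod>i\<in>UNIV. 1 - (x$i - a$i)^2)"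

lemma delta_eq: "delta a x = (if x = a then 1 else 0)"
proof (cases "x = a")
  case True then show ?thesis by (simp add: delta_def)
next
  case False
  then obtain i where i: "x$i \<noteq> a$i" by (auto simp: vec_eq_iff)
  then have "x$i - a$i \<noteq> 0" by simp
  then have "1 - (x$i - a$i)^2 = 0" using three_sq[of "x$i - a$i"] by (simp add: power2_eq_square)
  then have "delta a x = 0" unfolding delta_def by (intro prod_zero) auto
  with False show ?thesis by simp
qed

lemma quad_expand: fixes x t :: "'a::comm_ring_1"
  shows "1 - (x - t)^2 = (\<Sum>j\<le>2. (if j = 0 then 1 - t^2 else if j = 1 then 2 * t else -1) * x^j)"
  by (simp add: numeral_2_eq_2 atMost_Suc algebra_simps power2_eq_square)

lemma delta_ev: "\<exists>c. delta a = ev Eall c"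
proof -
  let ?p = "\<lambda>i j. (if j = 0 then 1 - (a$i)^2 else if j = 1 then 2 * a$i else -1::3)"
  have "delta a x = ev Eall (\<lambda>g. \<Prod>i\<in>UNIV. ?p i (g i)) x" for x
  proof -
    have "delta a x = (\<Prod>i\<in>UNIV. \<Sum>j\<le>2. ?p i j * (x$i)^j)"
      unfolding delta_def by (intro prod.cong refl quad_expand)
    also have "\<dots> = (\<Sum>g\<in>PiE UNIV (\<lambda>_. {..2::nat}). \<Prod>i\<in>UNIV. ?p i (g i) * (x$i)^(g i))"
      by (rule prod_sum_PiE) auto
    also have "\<dots> = ev Eall (\<lambda>g. \<Prod>i\<in>UNIV. ?p i (g i)) x"
      unfolding ev_def mon_def Eall_PiE by (simp add: prod.distrib)
    finally show ?thesis .
  qed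
  then show ?thesis by blast
qed

lemma all_ev: fixes f :: "3^'n::finite \<Rightarrow> 3" shows "\<exists>c. f = ev Eall c"
proof -
  obtain d where d: "\<And>a::3^'n. delta a = ev Eall (d a)" using delta_ev by metis
  have "f = (\<lambda>x. \<Sum>a\<in>UNIV. f a * delta a x)"
  proof (rule ext)
    fix x
    have "(\<Sum>a\<in>UNIV. f a * delta a x) = (\<Sum>a\<in>UNIV. if x = a then f a else 0)"
      by (intro sum.cong) (auto simp: delta_eq)
    then show "f x = (\<Sum>a\<in>UNIV. f a * delta a x)" by simp
  qed
  also have "(\<lambda>x. \<Sum>a\<in>UNIV. f a * delta a x) = ev Eall (\<lambda>e. \<Sum>a\<in>UNIV. f a * d a e)"
    by (simp add: ev_sum ev_smult d)
  finally show ?thesis by blast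
qed

lemma ev_surj: "ev Eall ` (Eall \<rightarrow>\<^sub>E (UNIV::3 set)) = (UNIV :: (3^'n::finite \<Rightarrow> 3) set)"
proof -
  have "f \<in> ev Eall ` (Eall \<rightarrow>\<^sub>E (UNIV::3 set))" for f :: "3^'n \<Rightarrow> 3"
  proof -
    obtain c where "f = ev Eall c" using all_ev by blast
    then have "f = ev Eall (restrict c Eall)" by (simp add: ev_restrict)
    then show ?thesis by auto
  qed
  then show ?thesis by auto
qed

lemma ev_inj: "inj_on (ev Eall) (Eall \<rightarrow>\<^sub>E (UNIV::3 set) :: (('n::finite \<Rightarrow> nat) \<Rightarrow> 3) set)"
proof (rule eq_card_imp_inj_on)
  show "finite (Eall \<rightarrow>\<^sub>E (UNIV::3 set) :: (('n::finite \<Rightarrow> nat) \<Rightarrow> 3) set)"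
    by (simp add: finite_PiE)
  have u: "PiE (UNIV :: (3^'n) set) (\<lambda>_. UNIV :: 3 set) = UNIV" by (simp add: PiE_UNIV_domain)
  have "card (PiE (UNIV :: (3^'n) set) (\<lambda>_. UNIV :: 3 set)) = 3 ^ (3 ^ CARD('n))"
    by (subst card_PiE) auto
  then have "card (UNIV :: (3^'n \<Rightarrow> 3) set) = 3 ^ (3 ^ CARD('n))" by (simp only: u)
  also have "\<dots> = card (Eall \<rightarrow>\<^sub>E (UNIV::3 set) :: (('n::finite \<Rightarrow> nat) \<Rightarrow> 3) set)"
    by (simp add: card_PiE card_Eall)
  finally show "card (ev Eall ` (Eall \<rightarrow>\<^sub>E (UNIV::3 set) :: (('n::finite \<Rightarrow> nat) \<Rightarrow> 3) set)) =
     card (Eall \<rightarrow>\<^sub>E (UNIV::3 set) :: (('n::finite \<Rightarrow> nat) \<Rightarrow> 3) set)"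
    by (simp add: ev_surj)
qed

lemma ev_inj_sub:
  assumes "S \<subseteq> Eall"
  shows "inj_on (ev S) (S \<rightarrow>\<^sub>E (UNIV::3 set) :: (('n::finite \<Rightarrow> nat) \<Rightarrow> 3) set)"
proof (rule inj_onI)
  fix c d :: "('n \<Rightarrow> nat) \<Rightarrow> 3"
  assume c: "c \<in> S \<rightarrow>\<^sub>E UNIV" and d: "d \<in> S \<rightarrow>\<^sub>E UNIV" and eq: "ev S c = ev S d"
  let ?x = "\<lambda>c. \<lambda>e\<in>Eall. if e \<in> S then c e else 0"
  have ext: "ev Eall (?x c) = ev S c" for c
  proof -
    have "ev Eall (?x c) = ev Eall (\<lambda>e. if e \<in> S then c e else 0)" by (simp only: ev_restrict)
    also have "\<dots> = ev S c" unfolding ev_def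
      by (intro ext) (use assms in \<open>simp add: if_distrib[of "\<lambda>y. y * _"] sum.If_cases Int_absorb1 Int_absorb2\<close>)
    finally show ?thesis .
  qed
  have "?x c = ?x d"
    using ev_inj[THEN inj_onD, of "?x c" "?x d"] eq ext by auto
  then have "c e = d e" if "e \<in> S" for e
    using that assms by (metis (mono_tags) restrict_apply' subsetD)
  with c d show "c = d" by (metis PiE_ext)
qed


lemma three_x2x: fixes x :: 3 shows "x + 2 * x = 0"
  using three_cases[of x] by auto

lemma three_sub: fixes x y :: 3 shows "x + 2 * y = x - y"
  using three_cases[of y] by auto

lemma support:
  fixes D :: "('x \<Rightarrow> 3) set" and A :: "'x set"
  assumes finA: "finite A" and ne: "D \<noteq> {}"
    and cl: "\<And>f g k. f \<in> D \<Longrightarrow> g \<in> D \<Longrightarrow> (\<lambda>x. f x + k * g x) \<in> D"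
    and van: "\<And>f x. f \<in> D \<Longrightarrow> x \<notin> A \<Longrightarrow> f x = 0"
  shows "\<exists>I\<subseteq>A. \<exists>P\<in>D. (\<forall>i\<in>I. P i = 1) \<and> card D \<le> 3 ^ card I"
proof -
  define F where "F = {I. I \<subseteq> A \<and> (\<forall>t::'x\<Rightarrow>3. \<exists>f\<in>D. \<forall>i\<in>I. f i = t i)}"
  have finF: "finite F" unfolding F_def using finA by (auto intro: finite_subset[of _ "Pow A"])
  have "{} \<in> F" unfolding F_def using ne by auto
  then have neF: "card ` F \<noteq> {}" by auto
  obtain I where I: "I \<in> F" "card I = Max (card ` F)"
    using Max_in[OF finite_imageI[OF finF] neF] by auto
  have maxI: "card J \<le> card I" if "J \<in> F" for J
    using I(2) Max_ge[OF finite_imageI[OF finF]] that by auto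
  from I(1) have IA: "I \<subseteq> A" and surjI: "\<And>t. \<exists>f\<in>D. \<forall>i\<in>I. f i = t i" unfolding F_def by auto
  have finI: "finite I" using IA finA finite_subset by auto
  have inj: "inj_on (\<lambda>f. restrict f I) D"
  proof (rule inj_onI, rule ccontr)
    fix f g assume f: "f \<in> D" and g: "g \<in> D" and eq: "restrict f I = restrict g I" and ne: "f \<noteq> g"
    then obtain b where b: "f b \<noteq> g b" by auto
    have bA: "b \<in> A" using b van f g by metis
    have bI: "b \<notin> I" using b eq by (metis restrict_apply')
    define v where "v = (\<lambda>x. f x + 2 * g x)"
    have vD: "v \<in> D" unfolding v_def using cl f g by blast
    have v0: "v i = 0" if "i \<in> I" for i
    proof -
      have "f i = g i" using eq that by (metis restrict_apply')
      then show ?thesis unfolding v_def using three_x2x by simp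
    qed
    have vb: "v b \<noteq> 0" unfolding v_def using b by (simp add: three_sub)
    have "insert b I \<in> F" unfolding F_def
    proof (intro CollectI conjI allI)
      show "insert b I \<subseteq> A" using IA bA by auto
      fix t :: "'x \<Rightarrow> 3"
      obtain u where u: "u \<in> D" "\<forall>i\<in>I. u i = t i" using surjI by blast
      define k where "k = (t b - u b) * v b"
      have wD: "(\<lambda>x. u x + k * v x) \<in> D" using cl u(1) vD by blast
      have "u b + k * v b = t b"
        unfolding k_def using three_sq[OF vb] by (simp add: mult.assoc)
      moreover have "u i + k * v i = t i" if "i \<in> I" for i using u(2) v0 that by simp
      ultimately show "\<exists>f\<in>D. \<forall>i\<in>insert b I. f i = t i" using wD by auto
    qed
    then have "card (insert b I) \<le> card I" by (rule maxI)
    with bI finI show False by simp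
  qed
  have "card D = card ((\<lambda>f. restrict f I) ` D)" using inj by (simp add: card_image)
  also have "\<dots> \<le> card (I \<rightarrow>\<^sub>E (UNIV :: 3 set))"
    by (intro card_mono) (auto simp: finI finite_PiE)
  also have "\<dots> = 3 ^ card I" using finI by (simp add: card_PiE)
  finally have cD: "card D \<le> 3 ^ card I" .
  obtain P where "P \<in> D" "\<forall>i\<in>I. P i = 1" using surjI[of "\<lambda>_. 1"] by blast
  with cD IA show ?thesis by blast
qed

lemma ev_sub: "ev S (\<lambda>e\<in>S. c e - d e) x = ev S c x - ev S d x"
  unfolding ev_def by (simp add: sum_subtractf left_diff_distrib)

lemma fiber_count:
  fixes S :: "('n::finite \<Rightarrow> nat) set" and A :: "(3^'n) set"
  assumes finS: "finite S"
  shows "card (S \<rightarrow>\<^sub>E (UNIV::3 set)) \<le> 3 ^ card (UNIV - A) * card {c \<in> S \<rightarrow>\<^sub>E (UNIV::3 set). \<forall>x. x \<notin> A \<longrightarrow> ev S c x = 0}"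
proof -
  let ?C = "S \<rightarrow>\<^sub>E (UNIV::3 set)"
  let ?U = "{c \<in> ?C. \<forall>x. x \<notin> A \<longrightarrow> ev S c x = 0}"
  define r where "r c = restrict (ev S c) (UNIV - A)" for c
  define s where "s y = (SOME c'. c' \<in> ?C \<and> r c' = y)" for y
  define sub where "sub c d = (\<lambda>e\<in>S. c e - d e)" for c d :: "('n \<Rightarrow> nat) \<Rightarrow> 3"
  define \<phi> where "\<phi> c = (r c, sub c (s (r c)))" for c
  have s: "s (r c) \<in> ?C \<and> r (s (r c)) = r c" if "c \<in> ?C" for c
    unfolding s_def by (rule someI[of _ c]) (use that in auto)
  have "inj_on \<phi> ?C"
  proof (rule inj_onI)
    fix c1 c2 assume c1: "c1 \<in> ?C" and c2: "c2 \<in> ?C" and eq: "\<phi> c1 = \<phi> c2"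
    then have r: "r c1 = r c2" and sb: "sub c1 (s (r c1)) = sub c2 (s (r c1))" unfolding \<phi>_def by auto
    have "c1 e = c2 e" if "e \<in> S" for e
      using fun_cong[OF sb, of e] that unfolding sub_def by simp
    then show "c1 = c2" using c1 c2 by (metis PiE_ext)
  qed
  moreover have "\<phi> ` ?C \<subseteq> ((UNIV - A) \<rightarrow>\<^sub>E (UNIV::3 set)) \<times> ?U"
  proof
    fix y assume "y \<in> \<phi> ` ?C"
    then obtain c where c: "c \<in> ?C" and y: "y = \<phi> c" by auto
    have "r c \<in> (UNIV - A) \<rightarrow>\<^sub>E (UNIV::3 set)" unfolding r_def by auto
    moreover have "sub c (s (r c)) \<in> ?U"
    proof -
      have "sub c (s (r c)) \<in> ?C" unfolding sub_def by auto
      moreover have "ev S (sub c (s (r c))) x = 0" if "x \<notin> A" for x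
      proof -
        have "ev S c x = ev S (s (r c)) x"
          using fun_cong[OF conjunct2[OF s[OF c]], of x] that unfolding r_def by simp
        then show ?thesis unfolding sub_def ev_sub by simp
      qed
      ultimately show ?thesis by auto
    qed
    ultimately show "y \<in> ((UNIV - A) \<rightarrow>\<^sub>E (UNIV::3 set)) \<times> ?U" unfolding y \<phi>_def by auto
  qed
  moreover have "finite (((UNIV - A) \<rightarrow>\<^sub>E (UNIV::3 set)) \<times> ?U)"
    using finS by (auto simp: finite_PiE)
  ultimately have "card ?C \<le> card (((UNIV - A) \<rightarrow>\<^sub>E (UNIV::3 set)) \<times> ?U)"
    by (rule card_inj_on_le)
  also have "\<dots> = 3 ^ card (UNIV - A) * card ?U"
    by (simp add: card_cartesian_product card_PiE)
  finally show ?thesis .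
qed


definition dif :: "('n \<Rightarrow> nat) \<Rightarrow> ('n \<Rightarrow> nat) \<Rightarrow> ('n \<Rightarrow> nat)" where
  "dif \<alpha> g = (\<lambda>i. \<alpha> i - g i)"

definition Gs :: "('n::finite \<Rightarrow> nat) \<Rightarrow> ('n \<Rightarrow> nat) set" where
  "Gs \<alpha> = PiE UNIV (\<lambda>i. {..\<alpha> i})"

definition wt :: "('n::finite \<Rightarrow> nat) \<Rightarrow> ('n \<Rightarrow> nat) \<Rightarrow> 3" where
  "wt \<alpha> g = (\<Prod>i\<in>UNIV. (-1)^(\<alpha> i) * of_nat (\<alpha> i choose g i))"

lemma finite_Gs[simp]: "finite (Gs \<alpha>)"
  unfolding Gs_def by (simp add: finite_PiE)

lemma mon_expand:
  fixes a b :: "3^'n::finite"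
  shows "mon \<alpha> (-(a+b)) = (\<Sum>g\<in>Gs \<alpha>. wt \<alpha> g * mon g a * mon (dif \<alpha> g) b)"
proof -
  have "mon \<alpha> (-(a+b)) = (\<Prod>i\<in>UNIV. \<Sum>j\<le>\<alpha> i. (-1)^(\<alpha> i) * of_nat (\<alpha> i choose j) * (a$i)^j * (b$i)^(\<alpha> i - j))"
  proof -
    have "(-(a$i + b$i))^(\<alpha> i) = (\<Sum>j\<le>\<alpha> i. (-1)^(\<alpha> i) * of_nat (\<alpha> i choose j) * (a$i)^j * (b$i)^(\<alpha> i - j))" for i
    proof -
      have "(-(a$i + b$i))^(\<alpha> i) = (-1)^(\<alpha> i) * (a$i + b$i)^(\<alpha> i)"
        by (metis mult_minus1 power_mult_distrib)
      also have "\<dots> = (-1)^(\<alpha> i) * (\<Sum>j\<le>\<alpha> i. of_nat (\<alpha> i choose j) * (a$i)^j * (b$i)^(\<alpha> i - j))"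
        by (simp add: binomial_ring)
      finally show ?thesis by (simp add: sum_distrib_left mult.assoc)
    qed
    then show ?thesis unfolding mon_def by simp
  qed
  also have "\<dots> = (\<Sum>g\<in>Gs \<alpha>. \<Prod>i\<in>UNIV. (-1)^(\<alpha> i) * of_nat (\<alpha> i choose g i) * (a$i)^(g i) * (b$i)^(\<alpha> i - g i))"
    unfolding Gs_def by (rule prod_sum_PiE) auto
  also have "\<dots> = (\<Sum>g\<in>Gs \<alpha>. wt \<alpha> g * mon g a * mon (dif \<alpha> g) b)"
    unfolding wt_def mon_def dif_def by (simp add: prod.distrib)
  finally show ?thesis .
qed

lemma Gs_le: "g \<in> Gs \<alpha> \<Longrightarrow> g i \<le> \<alpha> i"
  unfolding Gs_def by auto

lemma sum_dif: "g \<in> Gs \<alpha> \<Longrightarrow> sum (dif \<alpha> g) UNIV + sum g UNIV = sum \<alpha> UNIV"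
proof -
  assume g: "g \<in> Gs \<alpha>"
  have "sum (dif \<alpha> g) UNIV + sum g UNIV = sum (\<lambda>i. dif \<alpha> g i + g i) UNIV"
    by (simp add: sum.distrib)
  also have "\<dots> = sum \<alpha> UNIV" using Gs_le[OF g] unfolding dif_def by (intro sum.cong) auto
  finally show ?thesis .
qed

lemma clp:
  fixes I :: "(3^'n::finite) set" and c0 :: "('n \<Rightarrow> nat) \<Rightarrow> 3" and Ed :: "('n \<Rightarrow> nat) set"
  assumes EdE: "Ed \<subseteq> Eall" and Edk: "\<And>\<alpha>. \<alpha> \<in> Ed \<Longrightarrow> sum \<alpha> UNIV \<le> 2 * k"
  defines "Ek \<equiv> {e\<in>(Eall::('n \<Rightarrow> nat) set). sum e UNIV \<le> (k::nat)}"
  shows "card ((\<lambda>c. (\<lambda>b. \<Sum>a\<in>I. c a * ev Ed c0 (-(a+b)))) ` (I \<rightarrow>\<^sub>E (UNIV::3 set))) \<le> 3 ^ (2 * card Ek)"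
proof -
  have finEd: "finite Ed" by (rule finite_subset[OF EdE]) simp
  have finEk: "finite Ek" unfolding Ek_def by auto
  define Q where "Q = Sigma Ed Gs"
  define Ql where "Ql = {q\<in>Q. sum (snd q) UNIV \<le> k}"
  define Qr where "Qr = Q - Ql"
  have finQ: "finite Q" unfolding Q_def using finEd by auto
  define L where "L c g = (\<Sum>a\<in>I. c a * mon g a)" for c :: "3^'n \<Rightarrow> 3" and g
  define coef where "coef c q = c0 (fst q) * wt (fst q) (snd q) * L c (snd q)" for c q
  define H where "H c \<gamma> = (\<Sum>q\<in>{q\<in>Qr. dif (fst q) (snd q) = \<gamma>}. coef c q)" for c \<gamma>
  define \<Psi> where "\<Psi> uv = (\<lambda>b. (\<Sum>q\<in>Ql. c0 (fst q) * wt (fst q) (snd q) * fst uv (snd q) * mon (dif (fst q) (snd q)) b)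
      + (\<Sum>\<gamma>\<in>Ek. snd uv \<gamma> * mon \<gamma> b))" for uv :: "(('n \<Rightarrow> nat) \<Rightarrow> 3) \<times> (('n \<Rightarrow> nat) \<Rightarrow> 3)"
  have GsE: "g \<in> Eall" if "\<alpha> \<in> Ed" "g \<in> Gs \<alpha>" for \<alpha> g
  proof -
    have "\<alpha> i \<le> 2" for i using that(1) EdE unfolding Eall_def by auto
    then show ?thesis unfolding Eall_def by (auto intro: le_trans[OF Gs_le[OF that(2)]])
  qed
  have difE: "dif \<alpha> g \<in> Eall" if "\<alpha> \<in> Ed" for \<alpha> g
  proof -
    have "\<alpha> i \<le> 2" for i using that(1) EdE unfolding Eall_def by auto
    then show ?thesis unfolding Eall_def dif_def by (auto intro: le_trans[OF diff_le_self])
  qed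
  have key: "(\<lambda>b. \<Sum>a\<in>I. c a * ev Ed c0 (-(a+b))) = \<Psi> (restrict (L c) Ek, restrict (H c) Ek)" for c
  proof (rule ext)
    fix b
    have step1: "(\<Sum>a\<in>I. c a * ev Ed c0 (-(a+b))) = (\<Sum>q\<in>Q. coef c q * mon (dif (fst q) (snd q)) b)"
    proof -
      have "(\<Sum>a\<in>I. c a * ev Ed c0 (-(a+b)))
          = (\<Sum>a\<in>I. \<Sum>\<alpha>\<in>Ed. \<Sum>g\<in>Gs \<alpha>. c a * (c0 \<alpha> * (wt \<alpha> g * mon g a * mon (dif \<alpha> g) b)))"
        by (simp only: ev_def mon_expand sum_distrib_left)
      also have "\<dots> = (\<Sum>\<alpha>\<in>Ed. \<Sum>a\<in>I. \<Sum>g\<in>Gs \<alpha>. c a * (c0 \<alpha> * (wt \<alpha> g * mon g a * mon (dif \<alpha> g) b)))"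
        by (rule sum.swap)
      also have "\<dots> = (\<Sum>\<alpha>\<in>Ed. \<Sum>g\<in>Gs \<alpha>. \<Sum>a\<in>I. c a * (c0 \<alpha> * (wt \<alpha> g * mon g a * mon (dif \<alpha> g) b)))"
        by (intro sum.cong refl) (rule sum.swap)
      also have "\<dots> = (\<Sum>\<alpha>\<in>Ed. \<Sum>g\<in>Gs \<alpha>. coef c (\<alpha>, g) * mon (dif \<alpha> g) b)"
        unfolding coef_def L_def sum_distrib_left sum_distrib_right
        by (intro sum.cong refl) (simp add: mult_ac)
      also have "\<dots> = (\<Sum>q\<in>Q. coef c q * mon (dif (fst q) (snd q)) b)"
        unfolding Q_def by (simp add: sum.Sigma[OF finEd] split_def)
      finally show ?thesis .
    qed
    have split: "(\<Sum>q\<in>Q. coef c q * mon (dif (fst q) (snd q)) b)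
        = (\<Sum>q\<in>Ql. coef c q * mon (dif (fst q) (snd q)) b) + (\<Sum>q\<in>Qr. coef c q * mon (dif (fst q) (snd q)) b)"
      unfolding Qr_def using finQ by (subst sum.subset_diff[of Ql Q]) (auto simp: Ql_def add.commute)
    have left: "(\<Sum>q\<in>Ql. coef c q * mon (dif (fst q) (snd q)) b)
        = (\<Sum>q\<in>Ql. c0 (fst q) * wt (fst q) (snd q) * restrict (L c) Ek (snd q) * mon (dif (fst q) (snd q)) b)"
    proof (intro sum.cong refl)
      fix q assume q: "q \<in> Ql"
      then have "snd q \<in> Ek" unfolding Ql_def Q_def Ek_def using GsE by auto
      then show "coef c q * mon (dif (fst q) (snd q)) b = c0 (fst q) * wt (fst q) (snd q) * restrict (L c) Ek (snd q) * mon (dif (fst q) (snd q)) b"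
        unfolding coef_def by simp
    qed
    have img: "(\<lambda>q. dif (fst q) (snd q)) ` Qr \<subseteq> Ek"
    proof
      fix y assume "y \<in> (\<lambda>q. dif (fst q) (snd q)) ` Qr"
      then obtain \<alpha> g where q: "(\<alpha>, g) \<in> Qr" and y: "y = dif \<alpha> g" by auto
      then have a: "\<alpha> \<in> Ed" and g: "g \<in> Gs \<alpha>" and gk: "\<not> sum g UNIV \<le> k"
        unfolding Qr_def Ql_def Q_def by auto
      have "sum (dif \<alpha> g) UNIV + sum g UNIV = sum \<alpha> UNIV" by (rule sum_dif[OF g])
      with Edk[OF a] gk have "sum (dif \<alpha> g) UNIV \<le> k" by linarith
      then show "y \<in> Ek" unfolding Ek_def y using difE[OF a] by auto
    qed
    have right: "(\<Sum>q\<in>Qr. coef c q * mon (dif (fst q) (snd q)) b) = (\<Sum>\<gamma>\<in>Ek. restrict (H c) Ek \<gamma> * mon \<gamma> b)"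
    proof -
      have "(\<Sum>q\<in>Qr. coef c q * mon (dif (fst q) (snd q)) b)
          = (\<Sum>\<gamma>\<in>Ek. \<Sum>q\<in>{q\<in>Qr. dif (fst q) (snd q) = \<gamma>}. coef c q * mon (dif (fst q) (snd q)) b)"
        by (rule sum.group[symmetric]) (use finQ finEk img in \<open>auto simp: Qr_def\<close>)
      also have "\<dots> = (\<Sum>\<gamma>\<in>Ek. H c \<gamma> * mon \<gamma> b)"
        unfolding H_def by (intro sum.cong refl) (auto simp: sum_distrib_right)
      also have "\<dots> = (\<Sum>\<gamma>\<in>Ek. restrict (H c) Ek \<gamma> * mon \<gamma> b)"
        by (intro sum.cong) auto
      finally show ?thesis .
    qed
    show "(\<Sum>a\<in>I. c a * ev Ed c0 (-(a+b))) = \<Psi> (restrict (L c) Ek, restrict (H c) Ek) b"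
      unfolding step1 split left right \<Psi>_def by simp
  qed
  have "(\<lambda>c. (\<lambda>b. \<Sum>a\<in>I. c a * ev Ed c0 (-(a+b)))) ` (I \<rightarrow>\<^sub>E (UNIV::3 set))
      \<subseteq> \<Psi> ` ((Ek \<rightarrow>\<^sub>E (UNIV::3 set)) \<times> (Ek \<rightarrow>\<^sub>E (UNIV::3 set)))"
    using key by auto
  then have "card ((\<lambda>c. (\<lambda>b. \<Sum>a\<in>I. c a * ev Ed c0 (-(a+b)))) ` (I \<rightarrow>\<^sub>E (UNIV::3 set)))
      \<le> card (\<Psi> ` ((Ek \<rightarrow>\<^sub>E (UNIV::3 set)) \<times> (Ek \<rightarrow>\<^sub>E (UNIV::3 set))))"
    by (intro card_mono) (auto simp: finEk finite_PiE)
  also have "\<dots> \<le> card ((Ek \<rightarrow>\<^sub>E (UNIV::3 set)) \<times> (Ek \<rightarrow>\<^sub>E (UNIV::3 set)))"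
    by (rule card_image_le) (auto simp: finEk finite_PiE)
  also have "\<dots> = 3 ^ (2 * card Ek)"
    using finEk by (simp add: card_cartesian_product card_PiE power_add mult_2)
  finally show ?thesis .
qed


theorem mainTheorem6:
  fixes A :: "(3 ^ 'n) set"
  assumes "CARD('n) \<ge> 3" and "3 dvd CARD('n)"
    and "\<forall>a\<in>A. \<forall>b\<in>A. \<forall>c\<in>A. a + b + c = 0 \<longrightarrow> a = b \<and> b = c"
  shows "int (card A) \<le> 3 * (\<Sum>i = 0..2 * CARD('n) div 3. int (trinomial CARD('n) i))
                          - int (trinomial CARD('n) (2 * CARD('n) div 3))"
proof -
  note cap = assms(3)
  obtain t where nt: "CARD('n) = 3 * t" using assms(2) by blast
  define k where "k = 2 * t"
  have kdiv: "2 * CARD('n) div 3 = k" unfolding k_def nt by simp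
  define Ed where "Ed = {e\<in>(Eall::('n \<Rightarrow> nat) set). sum e UNIV \<le> 2 * k}"
  define Ek where "Ek = {e\<in>(Eall::('n \<Rightarrow> nat) set). sum e UNIV \<le> k}"
  define U where "U = {c \<in> Ed \<rightarrow>\<^sub>E (UNIV::3 set). \<forall>x. x \<notin> A \<longrightarrow> ev Ed c x = 0}"
  define D where "D = ev Ed ` U"
  have EdE: "Ed \<subseteq> Eall" unfolding Ed_def by auto
  have finEd: "finite Ed" by (rule finite_subset[OF EdE]) simp
  have fc: "card (Ed \<rightarrow>\<^sub>E (UNIV::3 set)) \<le> 3 ^ card (UNIV - A) * card U"
    unfolding U_def by (rule fiber_count[OF finEd])
  have cC: "card (Ed \<rightarrow>\<^sub>E (UNIV::3 set)) = 3 ^ card Ed"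
    using finEd by (simp add: card_PiE)
  have cD: "card D = card U"
    unfolding D_def
    by (rule card_image, rule inj_on_subset[OF ev_inj_sub[OF EdE]]) (auto simp: U_def)
  have zU: "restrict (\<lambda>_. 0) Ed \<in> U"
    unfolding U_def by (auto simp: ev_restrict ev_def)
  have "\<exists>I\<subseteq>A. \<exists>P\<in>D. (\<forall>i\<in>I. P i = 1) \<and> card D \<le> 3 ^ card I"
  proof (rule support)
    show "finite A" by simp
    show "D \<noteq> {}" unfolding D_def using zU by auto
    show "(\<lambda>x. f x + k' * g x) \<in> D" if fD: "f \<in> D" and gD: "g \<in> D" for f g k'
    proof -
      obtain c1 where c1: "c1 \<in> U" "f = ev Ed c1" using fD unfolding D_def by auto
      obtain c2 where c2: "c2 \<in> U" "g = ev Ed c2" using gD unfolding D_def by auto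
      let ?c = "restrict (\<lambda>e. c1 e + k' * c2 e) Ed"
      have ev: "ev Ed ?c = (\<lambda>x. f x + k' * g x)"
        unfolding ev_restrict ev_add ev_smult c1(2) c2(2) by simp
      have "?c \<in> U" unfolding U_def using c1 c2 by (auto simp: ev U_def)
      then show ?thesis unfolding D_def using ev by force
    qed
    show "f x = 0" if "f \<in> D" "x \<notin> A" for f x
      using that unfolding D_def U_def by auto
  qed
  then obtain I P where IA: "I \<subseteq> A" and PD: "P \<in> D" and P1: "\<forall>i\<in>I. P i = 1" and cI: "card D \<le> 3 ^ card I"
    by blast
  obtain c0 where c0: "c0 \<in> U" and Pc0: "P = ev Ed c0" using PD unfolding D_def by auto
  have Pvan: "P x = 0" if "x \<notin> A" for x using c0 that unfolding Pc0 U_def by auto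
  define \<Phi> where "\<Phi> c = (\<lambda>b. \<Sum>a\<in>I. c a * ev Ed c0 (-(a+b)))" for c :: "3^'n \<Rightarrow> 3"
  have diag: "\<Phi> c b = c b" if "b \<in> I" for c b
  proof -
    have "\<Phi> c b = (\<Sum>a\<in>I. if a = b then c a else 0)"
      unfolding \<Phi>_def Pc0[symmetric]
    proof (intro sum.cong refl)
      fix a assume a: "a \<in> I"
      show "c a * P (- (a + b)) = (if a = b then c a else 0)"
      proof (cases "a = b")
        case True
        have e: "- (a + b) = b" using True vec_neg2[of b] by (simp only:)
        show ?thesis unfolding e using True P1 that by simp
      next
        case False
        have "- (a + b) \<notin> A"
        proof
          assume "- (a + b) \<in> A"
          moreover have "a + b + - (a + b) = 0" by simp
          ultimately have "a = b" using cap a that IA by blast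
          with False show False by simp
        qed
        then show ?thesis using False Pvan by simp
      qed
    qed
    also have "\<dots> = c b" using that by simp
    finally show ?thesis .
  qed
  have injPhi: "inj_on \<Phi> (I \<rightarrow>\<^sub>E (UNIV::3 set))"
  proof (rule inj_onI)
    fix c1 c2 assume c1: "c1 \<in> I \<rightarrow>\<^sub>E (UNIV::3 set)" and c2: "c2 \<in> I \<rightarrow>\<^sub>E (UNIV::3 set)" and eq: "\<Phi> c1 = \<Phi> c2"
    have "c1 b = c2 b" if "b \<in> I" for b using diag[OF that, of c1] diag[OF that, of c2] eq by simp
    then show "c1 = c2" using c1 c2 by (metis PiE_ext)
  qed
  have finI: "finite I" by simp
  have "3 ^ card I = card (I \<rightarrow>\<^sub>E (UNIV::3 set))" using finI by (simp add: card_PiE)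
  also have "\<dots> = card (\<Phi> ` (I \<rightarrow>\<^sub>E (UNIV::3 set)))" using injPhi by (simp add: card_image)
  also have "\<dots> \<le> 3 ^ (2 * card Ek)"
    unfolding \<Phi>_def Ek_def by (rule clp[OF EdE]) (simp add: Ed_def)
  finally have cIk: "(3::nat) ^ card I \<le> 3 ^ (2 * card Ek)" .
  have "(3::nat) ^ card Ed \<le> 3 ^ card (UNIV - A) * 3 ^ (2 * card Ek)"
  proof -
    have "(3::nat) ^ card Ed \<le> 3 ^ card (UNIV - A) * card U" using fc cC by simp
    also have "\<dots> \<le> 3 ^ card (UNIV - A) * 3 ^ (2 * card Ek)"
      using cD cI cIk by (intro mult_le_mono2) (metis le_trans)
    finally show ?thesis .
  qed
  then have "(3::nat) ^ card Ed \<le> 3 ^ (card (UNIV - A) + 2 * card Ek)" by (simp add: power_add)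
  then have ineq: "card Ed \<le> card (UNIV - A) + 2 * card Ek"
    by (rule power_le_imp_le_exp[rotated]) simp
  have cUA: "card (UNIV - A) = 3 ^ CARD('n) - card A"
    by (simp add: card_Diff_subset)
  have cAle: "card A \<le> 3 ^ CARD('n)"
    using card_mono[of "UNIV :: (3^'n) set" A] by simp
  have part: "card (Eall :: ('n \<Rightarrow> nat) set) = card Ed + card {e\<in>(Eall :: ('n \<Rightarrow> nat) set). sum e UNIV > 2 * k}"
  proof -
    have "(Eall :: ('n \<Rightarrow> nat) set) = Ed \<union> {e\<in>(Eall :: ('n \<Rightarrow> nat) set). sum e UNIV > 2 * k}"
      unfolding Ed_def by auto
    moreover have "Ed \<inter> {e\<in>(Eall :: ('n \<Rightarrow> nat) set). sum e UNIV > 2 * k} = {}"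
      unfolding Ed_def by auto
    ultimately show ?thesis using finEd
      by (metis (no_types, lifting) card_Un_disjoint finite_Eall finite_subset sup_ge2)
  qed
  have sym: "card {e\<in>(Eall :: ('n \<Rightarrow> nat) set). sum e UNIV > 2 * k} = card {e\<in>(Eall :: ('n \<Rightarrow> nat) set). sum e UNIV < k}"
  proof -
    have "card {e\<in>(Eall :: ('n \<Rightarrow> nat) set). sum e UNIV > 2 * k} = card {e\<in>(Eall :: ('n \<Rightarrow> nat) set). sum e UNIV < 2 * CARD('n) - 2 * k}"
      by (rule card_Egt_sym) (simp add: nt k_def)
    also have "2 * CARD('n) - 2 * k = k" by (simp add: nt k_def)
    finally show ?thesis .
  qed
  have cEk: "card Ek = (\<Sum>j=0..k. trinomial CARD('n) j)" unfolding Ek_def by (rule card_Ele)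
  have cElt: "card {e\<in>(Eall :: ('n \<Rightarrow> nat) set). sum e UNIV < k} = (\<Sum>j<k. trinomial CARD('n) j)"
    by (rule card_Elt)
  have natb: "card A \<le> (\<Sum>j<k. trinomial CARD('n) j) + 2 * (\<Sum>j=0..k. trinomial CARD('n) j)"
    using ineq cUA cAle part sym card_Eall[where 'n='n] cEk cElt by linarith
  have split: "(\<Sum>j=0..k. trinomial CARD('n) j) = (\<Sum>j<k. trinomial CARD('n) j) + trinomial CARD('n) k"
    by (simp add: atLeast0AtMost lessThan_Suc_atMost[symmetric])
  have "int (card A) \<le> 3 * int (\<Sum>j=0..k. trinomial CARD('n) j) - int (trinomial CARD('n) k)"
    using natb split by linarith
  then show ?thesis unfolding kdiv by (simp add: of_nat_sum)
qed

end
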